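(* If there exist a CMDRR$(n,k)$, a SAMDRR$(m)$, and two mutually orthogonal latin squares of order $n$, then there exists a CMDRR$(mn, mk)$.
   Context: A mixed doubles game is a match between two teams, each team consisting of one man and one woman; in a game $M_a F_b$ v $M_c F_d$, $M_a$ and $F_b$ are partners, $M_c$ and $F_d$ are partners, and each player of one team opposes each player of the other team. A complete mixed doubles round robin tournament CMDRR$(n,k)$ is a schedule (set) of mixed doubles games for $n$ men and $n$ women, of which $k$ men and $k$ women are paired into $k$ spouse pairs (a spouse pair is one man and one woman), such that: spouses never play in a game together as partners or opponents; every man and woman who are not spouses are partners exactly once and opponents exactly once; each player who has a spouse opposes every other player of the same sex exactly once; each player who does not have a spouse opposes some other same-sex player who does not have a spouse exactly twice and opposes all other same-sex players exactly once. A spouse-avoiding mixed doubles round robin tournament SAMDRR$(m)$ is a schedule of mixed doubles games for $m$ husband-and-wife couples in which spouses never play in a game together as partners or opponents, every man and woman who are not spouses are partners exactly once and opponents exactly once, and every pair of players of the same sex are opponents exactly once (i.e. a CMDRR$(m,m)$). *)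

theory Defs
  imports Main
begin

text \<open>Players: men M_0..M_(n-1) and women F_0..F_(n-1), both indexed by {..<n}.
A team is a pair (man, woman). A game M_a F_b v M_c F_d is the unordered pair of
teams {(a,b),(c,d)}.\<close>

type_synonym team = "nat \<times> nat"
type_synonym game = "team set"

definition is_game :: "nat \<Rightarrow> game \<Rightarrow> bool" where
  "is_game n g \<longleftrightarrow> (\<exists>a b c d. g = {(a,b),(c,d)} \<and> a < n \<and> b < n \<and> c < n \<and> d < n
                         \<and> a \<noteq> c \<and> b \<noteq> d)"

definition plays_man :: "game \<Rightarrow> nat \<Rightarrow> bool" where
  "plays_man g x \<longleftrightarrow> (\<exists>t\<in>g. fst t = x)"

definition plays_woman :: "game \<Rightarrow> nat \<Rightarrow> bool" where
  "plays_woman g y \<longleftrightarrow> (\<exists>t\<in>g. snd t = y)"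

definition partners :: "game set \<Rightarrow> nat \<Rightarrow> nat \<Rightarrow> nat" where
  "partners S a b = card {g\<in>S. (a,b) \<in> g}"

definition opp_mw :: "game set \<Rightarrow> nat \<Rightarrow> nat \<Rightarrow> nat" where
  "opp_mw S a b = card {g\<in>S. \<exists>t\<in>g. \<exists>u\<in>g. t \<noteq> u \<and> fst t = a \<and> snd u = b}"

definition opp_mm :: "game set \<Rightarrow> nat \<Rightarrow> nat \<Rightarrow> nat" where
  "opp_mm S a c = card {g\<in>S. \<exists>t\<in>g. \<exists>u\<in>g. t \<noteq> u \<and> fst t = a \<and> fst u = c}"

definition opp_ww :: "game set \<Rightarrow> nat \<Rightarrow> nat \<Rightarrow> nat" where
  "opp_ww S b d = card {g\<in>S. \<exists>t\<in>g. \<exists>u\<in>g. t \<noteq> u \<and> snd t = b \<and> snd u = d}"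

definition spouse_pairs :: "nat \<Rightarrow> nat \<Rightarrow> team set \<Rightarrow> bool" where
  "spouse_pairs n k sp \<longleftrightarrow> sp \<subseteq> {..<n} \<times> {..<n} \<and> card sp = k
     \<and> (\<forall>p\<in>sp. \<forall>q\<in>sp. fst p = fst q \<longleftrightarrow> snd p = snd q)"

definition has_spouse_m :: "team set \<Rightarrow> nat \<Rightarrow> bool" where
  "has_spouse_m sp a \<longleftrightarrow> (\<exists>y. (a,y) \<in> sp)"

definition has_spouse_w :: "team set \<Rightarrow> nat \<Rightarrow> bool" where
  "has_spouse_w sp b \<longleftrightarrow> (\<exists>x. (x,b) \<in> sp)"

definition is_cmdrr :: "nat \<Rightarrow> nat \<Rightarrow> team set \<Rightarrow> game set \<Rightarrow> bool" where
  "is_cmdrr n k sp S \<longleftrightarrow>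
     spouse_pairs n k sp \<and>
     (\<forall>g\<in>S. is_game n g) \<and>
     (\<forall>g\<in>S. \<forall>(x,y)\<in>sp. \<not> (plays_man g x \<and> plays_woman g y)) \<and>
     (\<forall>a<n. \<forall>b<n. (a,b) \<notin> sp \<longrightarrow> partners S a b = 1 \<and> opp_mw S a b = 1) \<and>
     (\<forall>a<n. has_spouse_m sp a \<longrightarrow> (\<forall>c<n. c \<noteq> a \<longrightarrow> opp_mm S a c = 1)) \<and>
     (\<forall>a<n. \<not> has_spouse_m sp a \<longrightarrow>
        (\<exists>c<n. c \<noteq> a \<and> \<not> has_spouse_m sp c \<and> opp_mm S a c = 2 \<and>
           (\<forall>c'<n. c' \<noteq> a \<and> c' \<noteq> c \<longrightarrow> opp_mm S a c' = 1))) \<and>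
     (\<forall>b<n. has_spouse_w sp b \<longrightarrow> (\<forall>d<n. d \<noteq> b \<longrightarrow> opp_ww S b d = 1)) \<and>
     (\<forall>b<n. \<not> has_spouse_w sp b \<longrightarrow>
        (\<exists>d<n. d \<noteq> b \<and> \<not> has_spouse_w sp d \<and> opp_ww S b d = 2 \<and>
           (\<forall>d'<n. d' \<noteq> b \<and> d' \<noteq> d \<longrightarrow> opp_ww S b d' = 1)))"

definition CMDRR_exists :: "nat \<Rightarrow> nat \<Rightarrow> bool" where
  "CMDRR_exists n k \<longleftrightarrow> (\<exists>sp S. is_cmdrr n k sp S)"

definition SAMDRR_exists :: "nat \<Rightarrow> bool" where
  "SAMDRR_exists m \<longleftrightarrow> CMDRR_exists m m"

definition latin_square :: "nat \<Rightarrow> (nat \<Rightarrow> nat \<Rightarrow> nat) \<Rightarrow> bool" where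
  "latin_square n L \<longleftrightarrow>
     (\<forall>i<n. bij_betw (L i) {..<n} {..<n}) \<and> (\<forall>j<n. bij_betw (\<lambda>i. L i j) {..<n} {..<n})"

definition orthogonal :: "nat \<Rightarrow> (nat \<Rightarrow> nat \<Rightarrow> nat) \<Rightarrow> (nat \<Rightarrow> nat \<Rightarrow> nat) \<Rightarrow> bool" where
  "orthogonal n L1 L2 \<longleftrightarrow> inj_on (\<lambda>(i,j). (L1 i j, L2 i j)) ({..<n} \<times> {..<n})"

definition two_MOLS_exist :: "nat \<Rightarrow> bool" where
  "two_MOLS_exist n \<longleftrightarrow> (\<exists>L1 L2. latin_square n L1 \<and> latin_square n L2 \<and> orthogonal n L1 L2)"

end

theory Submission
  imports Defs
begin



definition enc :: "nat \<Rightarrow> nat \<Rightarrow> nat \<Rightarrow> nat" where "enc n i x = i*n + x"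

lemma enc_inj[simp]: "x < n \<Longrightarrow> y < n \<Longrightarrow> enc n i x = enc n j y \<longleftrightarrow> i = j \<and> x = y"
  unfolding enc_def
  by (metis add_diff_cancel_left' div_mult_self1 less_nat_zero_code mod_div_trivial mod_mult_self2 mod_less nat_mult_eq_cancel1 not_gr_zero div_less add.commute mult.commute)

lemma enc_less: "i < m \<Longrightarrow> x < n \<Longrightarrow> enc n i x < m * n"
  unfolding enc_def
  by (metis add_lessD1 less_imp_le_nat mult_le_mono1 Suc_leI add_less_le_mono mult_Suc nat_add_left_cancel_less add.commute order_less_le_trans)

lemma enc_surj: "p < m * n \<Longrightarrow> \<exists>i x. i < m \<and> x < n \<and> p = enc n i x"
  unfolding enc_def
  apply (rule exI[of _ "p div n"], rule exI[of _ "p mod n"])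
  by (metis div_eq_0_iff div_less_iff_less_mult div_mult_mod_eq mod_less_divisor mult.commute mult_0_right not_gr_zero not_less_zero)

lemma matching:
  assumes "spouse_pairs N K sp" "K = N" "i < N"
  shows "\<exists>j. (i,j) \<in> sp" "\<exists>j. (j,i) \<in> sp"
proof -
  have sub: "sp \<subseteq> {..<N} \<times> {..<N}" and c: "card sp = N"
    and mt: "\<forall>p\<in>sp. \<forall>q\<in>sp. fst p = fst q \<longleftrightarrow> snd p = snd q"
    using assms unfolding spouse_pairs_def by auto
  have fin: "finite sp" using sub finite_subset by blast
  have i1: "inj_on fst sp" unfolding inj_on_def using mt by (metis prod.expand)
  have i2: "inj_on snd sp" unfolding inj_on_def using mt by (metis prod.expand)
  have "fst ` sp = {..<N}"
    by (rule card_subset_eq) (use sub c card_image[OF i1] in auto)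
  then have "i \<in> fst ` sp" using assms(3) by simp
  then obtain p where "p \<in> sp" "i = fst p" by blast
  then show "\<exists>j. (i,j) \<in> sp" by (metis prod.collapse)
  have "snd ` sp = {..<N}"
    by (rule card_subset_eq) (use sub c card_image[OF i2] in auto)
  then have "i \<in> snd ` sp" using assms(3) by simp
  then obtain q where "q \<in> sp" "i = snd q" by blast
  then show "\<exists>j. (j,i) \<in> sp" by (metis prod.collapse)
qed

lemma cmdrr_parts:
  assumes "is_cmdrr n k sp S"
  shows "spouse_pairs n k sp"
    "\<And>g. g\<in>S \<Longrightarrow> is_game n g"
    "\<And>g x y. g\<in>S \<Longrightarrow> (x,y)\<in>sp \<Longrightarrow> \<not> (plays_man g x \<and> plays_woman g y)"
    "\<And>a b. a<n \<Longrightarrow> b<n \<Longrightarrow> (a,b) \<notin> sp \<Longrightarrow> partners S a b = 1"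
    "\<And>a b. a<n \<Longrightarrow> b<n \<Longrightarrow> (a,b) \<notin> sp \<Longrightarrow> opp_mw S a b = 1"
    "\<And>a c. a<n \<Longrightarrow> has_spouse_m sp a \<Longrightarrow> c<n \<Longrightarrow> c \<noteq> a \<Longrightarrow> opp_mm S a c = 1"
    "\<And>a. a<n \<Longrightarrow> \<not> has_spouse_m sp a \<Longrightarrow>
        (\<exists>c<n. c \<noteq> a \<and> \<not> has_spouse_m sp c \<and> opp_mm S a c = 2 \<and>
           (\<forall>c'<n. c' \<noteq> a \<and> c' \<noteq> c \<longrightarrow> opp_mm S a c' = 1))"
    "\<And>b d. b<n \<Longrightarrow> has_spouse_w sp b \<Longrightarrow> d<n \<Longrightarrow> d \<noteq> b \<Longrightarrow> opp_ww S b d = 1"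
    "\<And>b. b<n \<Longrightarrow> \<not> has_spouse_w sp b \<Longrightarrow>
        (\<exists>d<n. d \<noteq> b \<and> \<not> has_spouse_w sp d \<and> opp_ww S b d = 2 \<and>
           (\<forall>d'<n. d' \<noteq> b \<and> d' \<noteq> d \<longrightarrow> opp_ww S b d' = 1))"
proof -
  note h = assms[unfolded is_cmdrr_def]
  note h2 = h[THEN conjunct2] and h3 = h[THEN conjunct2, THEN conjunct2]
  note h4 = h3[THEN conjunct2] and h5 = h3[THEN conjunct2, THEN conjunct2]
  note h6 = h5[THEN conjunct2] and h7 = h5[THEN conjunct2, THEN conjunct2]
  note h8 = h7[THEN conjunct2]
  show "spouse_pairs n k sp" using h[THEN conjunct1] .
  show "\<And>g. g\<in>S \<Longrightarrow> is_game n g" using h2[THEN conjunct1] by blast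
  show "\<And>g x y. g\<in>S \<Longrightarrow> (x,y)\<in>sp \<Longrightarrow> \<not> (plays_man g x \<and> plays_woman g y)"
    using h3[THEN conjunct1] by fast
  show "\<And>a b. a<n \<Longrightarrow> b<n \<Longrightarrow> (a,b) \<notin> sp \<Longrightarrow> partners S a b = 1" using h4[THEN conjunct1] by blast
  show "\<And>a b. a<n \<Longrightarrow> b<n \<Longrightarrow> (a,b) \<notin> sp \<Longrightarrow> opp_mw S a b = 1" using h4[THEN conjunct1] by blast
  show "\<And>a c. a<n \<Longrightarrow> has_spouse_m sp a \<Longrightarrow> c<n \<Longrightarrow> c \<noteq> a \<Longrightarrow> opp_mm S a c = 1" using h5[THEN conjunct1] by blast
  show "\<And>a. a<n \<Longrightarrow> \<not> has_spouse_m sp a \<Longrightarrow>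
        (\<exists>c<n. c \<noteq> a \<and> \<not> has_spouse_m sp c \<and> opp_mm S a c = 2 \<and>
           (\<forall>c'<n. c' \<noteq> a \<and> c' \<noteq> c \<longrightarrow> opp_mm S a c' = 1))" using h6[THEN conjunct1] by blast
  show "\<And>b d. b<n \<Longrightarrow> has_spouse_w sp b \<Longrightarrow> d<n \<Longrightarrow> d \<noteq> b \<Longrightarrow> opp_ww S b d = 1" using h7[THEN conjunct1] by blast
  show "\<And>b. b<n \<Longrightarrow> \<not> has_spouse_w sp b \<Longrightarrow>
        (\<exists>d<n. d \<noteq> b \<and> \<not> has_spouse_w sp d \<and> opp_ww S b d = 2 \<and>
           (\<forall>d'<n. d' \<noteq> b \<and> d' \<noteq> d \<longrightarrow> opp_ww S b d' = 1))" using h8 by blast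
qed




locale prod_setup =
  fixes n m k :: nat and sp :: "team set" and S :: "game set"
    and spm :: "team set" and Sm :: "game set" and L1 L2 :: "nat \<Rightarrow> nat \<Rightarrow> nat"
  assumes cm: "is_cmdrr n k sp S" and sa: "is_cmdrr m m spm Sm"
    and l1: "latin_square n L1" and l2: "latin_square n L2" and orth: "orthogonal n L1 L2"
begin

definition sg :: "nat \<Rightarrow> nat" where "sg i = (THE j. (i,j) \<in> spm)"

lemma spm_props: "spm \<subseteq> {..<m} \<times> {..<m}" "\<And>p q. p \<in> spm \<Longrightarrow> q \<in> spm \<Longrightarrow> fst p = fst q \<longleftrightarrow> snd p = snd q"
  using cmdrr_parts(1)[OF sa] unfolding spouse_pairs_def by auto

lemma spm_sg: "(i,j) \<in> spm \<Longrightarrow> sg i = j"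
  unfolding sg_def by (rule the_equality) (use spm_props(2) in fastforce)+

lemma sg_spm: "i < m \<Longrightarrow> (i, sg i) \<in> spm"
proof -
  assume "i < m"
  then obtain j where "(i,j) \<in> spm" using matching(1)[of m m spm i] cmdrr_parts(1)[OF sa] by auto
  then show ?thesis using spm_sg by simp
qed

lemma sg_less: "i < m \<Longrightarrow> sg i < m"
  using sg_spm spm_props(1) by blast

lemma sg_inj: "i < m \<Longrightarrow> j < m \<Longrightarrow> sg i = sg j \<Longrightarrow> i = j"
  using sg_spm spm_props(2) by fastforce

lemma sg_surj: "b < m \<Longrightarrow> \<exists>a<m. sg a = b"
proof -
  assume "b < m"
  then obtain a where "(a,b) \<in> spm" using matching(2)[of m m spm b] cmdrr_parts(1)[OF sa] by auto
  then show ?thesis using spm_sg spm_props(1) by blast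
qed

lemma S_game: "g \<in> S \<Longrightarrow> \<exists>a b c d. g = {(a,b),(c,d)} \<and> a<n \<and> b<n \<and> c<n \<and> d<n \<and> a\<noteq>c \<and> b\<noteq>d"
  using cmdrr_parts(2)[OF cm] unfolding is_game_def by blast

lemma Sm_game: "g \<in> Sm \<Longrightarrow> \<exists>a b c d. g = {(a,b),(c,d)} \<and> a<m \<and> b<m \<and> c<m \<and> d<m \<and> a<c \<and> b\<noteq>d"
proof -
  assume "g \<in> Sm"
  then obtain a b c d where g: "g = {(a,b),(c,d)}" "a<m" "b<m" "c<m" "d<m" "a\<noteq>c" "b\<noteq>d"
    using cmdrr_parts(2)[OF sa] unfolding is_game_def by blast
  show ?thesis
  proof (cases "a < c")
    case True then show ?thesis using g by (intro exI[of _ a] exI[of _ b] exI[of _ c] exI[of _ d]) simp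
  next
    case False
    then have "c < a" using g by simp
    moreover have "g = {(c,d),(a,b)}" using g by auto
    ultimately show ?thesis using g by (intro exI[of _ c] exI[of _ d] exI[of _ a] exI[of _ b]) simp
  qed
qed

lemma Sm_game_props: "{(a,b),(c,d)} \<in> Sm \<Longrightarrow> a<m \<and> b<m \<and> c<m \<and> d<m \<and> a\<noteq>c \<and> b\<noteq>d"
proof -
  assume "{(a,b),(c,d)} \<in> Sm"
  then have "is_game m {(a,b),(c,d)}" using cmdrr_parts(2)[OF sa] by blast
  then obtain p q r s where g: "{(a,b),(c,d)} = {(p,q),(r,s)}" "p<m" "q<m" "r<m" "s<m" "p\<noteq>r" "q\<noteq>s"
    unfolding is_game_def by (elim exE conjE) (rule that)
  from g(1) have "(a=p \<and> b=q \<and> c=r \<and> d=s) \<or> (a=r \<and> b=s \<and> c=p \<and> d=q)"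
    unfolding doubleton_eq_iff by simp
  then show ?thesis using g(2-7) by (elim disjE conjE) simp_all
qed

lemma orient_eq: "{(a,b),(c,d)} = {(a',b'),(c',d'::nat)} \<Longrightarrow> a<c \<Longrightarrow> a'<(c'::nat) \<Longrightarrow> a=a' \<and> b=b' \<and> c=c' \<and> d=d'"
proof -
  assume h: "{(a,b),(c,d)} = {(a',b'),(c',d'::nat)}" "a<c" "a'<(c'::nat)"
  have "(a=a' \<and> b=b' \<and> c=c' \<and> d=d') \<or> (a=c' \<and> b=d' \<and> c=a' \<and> d=b')"
    using h(1) unfolding doubleton_eq_iff by simp
  then show ?thesis using h(2,3) by linarith
qed

lemma latin_row: "latin_square n L \<Longrightarrow> x<n \<Longrightarrow> z<n \<Longrightarrow> \<exists>y<n. L x y = z \<and> (\<forall>y'<n. L x y' = z \<longrightarrow> y' = y)"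
proof -
  assume "latin_square n L" "x<n" "z<n"
  then have b: "bij_betw (L x) {..<n} {..<n}" unfolding latin_square_def by blast
  then have "z \<in> L x ` {..<n}" using \<open>z<n\<close> unfolding bij_betw_def by simp
  then obtain y where "y<n" "L x y = z" by auto
  moreover have "inj_on (L x) {..<n}" using b unfolding bij_betw_def by simp
  ultimately show ?thesis unfolding inj_on_def by blast
qed

lemma latin_col: "latin_square n L \<Longrightarrow> y<n \<Longrightarrow> z<n \<Longrightarrow> \<exists>x<n. L x y = z \<and> (\<forall>x'<n. L x' y = z \<longrightarrow> x' = x)"
proof -
  assume "latin_square n L" "y<n" "z<n"
  then have b: "bij_betw (\<lambda>i. L i y) {..<n} {..<n}" unfolding latin_square_def by blast
  then have "z \<in> (\<lambda>i. L i y) ` {..<n}" using \<open>z<n\<close> unfolding bij_betw_def by simp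
  then obtain x where "x<n" "L x y = z" by auto
  moreover have "inj_on (\<lambda>i. L i y) {..<n}" using b unfolding bij_betw_def by simp
  ultimately show ?thesis unfolding inj_on_def by blast
qed

lemma latin_less: "latin_square n L \<Longrightarrow> x<n \<Longrightarrow> y<n \<Longrightarrow> L x y < n"
proof -
  assume "latin_square n L" "x<n" "y<n"
  then have b: "bij_betw (L x) {..<n} {..<n}" unfolding latin_square_def by blast
  then show ?thesis using \<open>y<n\<close> unfolding bij_betw_def by auto
qed

lemma L_less: "x<n \<Longrightarrow> y<n \<Longrightarrow> L1 x y < n" "x<n \<Longrightarrow> y<n \<Longrightarrow> L2 x y < n"
  using latin_less l1 l2 by auto

lemma orth_ex: "z<n \<Longrightarrow> w<n \<Longrightarrow> \<exists>x<n. \<exists>y<n. L1 x y = z \<and> L2 x y = w \<and> (\<forall>x'<n. \<forall>y'<n. L1 x' y' = z \<and> L2 x' y' = w \<longrightarrow> x' = x \<and> y' = y)"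
proof -
  assume zw: "z<n" "w<n"
  let ?f = "\<lambda>(i,j). (L1 i j, L2 i j)"
  let ?A = "{..<n} \<times> {..<n}"
  have inj: "inj_on ?f ?A" using orth unfolding orthogonal_def .
  have sub: "?f ` ?A \<subseteq> ?A" using L_less by auto
  have "?f ` ?A = ?A" by (rule card_subset_eq) (use sub card_image[OF inj] in auto)
  then have "(z,w) \<in> ?f ` ?A" using zw by auto
  then obtain x y where xy: "x<n" "y<n" "L1 x y = z" "L2 x y = w" by auto
  moreover have "\<forall>x'<n. \<forall>y'<n. L1 x' y' = z \<and> L2 x' y' = w \<longrightarrow> x' = x \<and> y' = y"
    using inj xy unfolding inj_on_def by auto
  ultimately show ?thesis by blast
qed

end



context prod_setup begin

definition Fb :: "nat \<Rightarrow> game \<Rightarrow> game" where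
  "Fb i g = (\<lambda>(x,y). (enc n i x, enc n (sg i) y)) ` g"
definition Ft :: "nat\<times>nat\<times>nat\<times>nat\<times>nat\<times>nat \<Rightarrow> game" where
  "Ft t = (case t of (a,b,c,d,x,y) \<Rightarrow> {(enc n a x, enc n b (L1 x y)), (enc n c y, enc n d (L2 x y))})"
definition Xt :: "(nat\<times>nat\<times>nat\<times>nat\<times>nat\<times>nat) set" where
  "Xt = {(a,b,c,d,x,y). {(a,b),(c,d)} \<in> Sm \<and> a<c \<and> x<n \<and> y<n}"
definition Xb :: "(nat \<times> game) set" where "Xb = {..<m} \<times> S"
definition XX where "XX = Inl ` Xb \<union> Inr ` Xt"
definition FF where "FF = case_sum (\<lambda>(i,g). Fb i g) Ft"
definition S' where "S' = FF ` XX"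
definition sp' where "sp' = (\<lambda>(i,x,y). (enc n i x, enc n (sg i) y)) ` ({..<m} \<times> sp)"

lemma Ft_simp: "Ft (a,b,c,d,x,y) = {(enc n a x, enc n b (L1 x y)), (enc n c y, enc n d (L2 x y))}"
  unfolding Ft_def by simp

lemma Fb_explicit: "g \<in> S \<Longrightarrow> \<exists>p q r s. g = {(p,q),(r,s)} \<and> p<n \<and> q<n \<and> r<n \<and> s<n \<and> p\<noteq>r \<and> q\<noteq>s
   \<and> Fb i g = {(enc n i p, enc n (sg i) q), (enc n i r, enc n (sg i) s)}"
proof -
  assume "g \<in> S"
  then obtain p q r s where g: "g = {(p,q),(r,s)}" "p<n" "q<n" "r<n" "s<n" "p\<noteq>r" "q\<noteq>s"
    using S_game[OF \<open>g \<in> S\<close>] by (elim exE conjE) (rule that)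
  have "Fb i g = {(enc n i p, enc n (sg i) q), (enc n i r, enc n (sg i) s)}"
    unfolding Fb_def g(1) by simp
  then show ?thesis using g by (intro exI[of _ p] exI[of _ q] exI[of _ r] exI[of _ s]) simp
qed

lemma Xt_props: "(a,b,c,d,x,y) \<in> Xt \<Longrightarrow> a<m \<and> b<m \<and> c<m \<and> d<m \<and> a<c \<and> b\<noteq>d \<and> x<n \<and> y<n \<and> {(a,b),(c,d)} \<in> Sm"
  unfolding Xt_def using Sm_game_props by auto

lemma inj_bb:
  assumes "i<m" "j<m" "g\<in>S" "h\<in>S" "Fb i g = Fb j h"
  shows "i = j \<and> g = h"
proof -
  obtain p q r s where g: "g = {(p,q),(r,s)}" "p<n" "q<n" "r<n" "s<n"
      "Fb i g = {(enc n i p, enc n (sg i) q), (enc n i r, enc n (sg i) s)}"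
    using Fb_explicit[OF assms(3), of i] by (elim exE conjE) (rule that)
  obtain p' q' r' s' where h: "h = {(p',q'),(r',s')}" "p'<n" "q'<n" "r'<n" "s'<n"
      "Fb j h = {(enc n j p', enc n (sg j) q'), (enc n j r', enc n (sg j) s')}"
    using Fb_explicit[OF assms(4), of j] by (elim exE conjE) (rule that)
  have e: "{(enc n i p, enc n (sg i) q), (enc n i r, enc n (sg i) s)} = {(enc n j p', enc n (sg j) q'), (enc n j r', enc n (sg j) s')}"
    using assms(5) g(6) h(6) by simp
  have "(i = j \<and> p = p' \<and> q = q' \<and> r = r' \<and> s = s') \<or> (i = j \<and> p = r' \<and> q = s' \<and> r = p' \<and> s = q')"
    using e unfolding doubleton_eq_iff using g(2-5) h(2-5) by (simp, blast)
  then show ?thesis using g(1) h(1) by (elim disjE conjE) (simp_all add: insert_commute)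
qed

lemma inj_bt:
  assumes "g\<in>S" "t \<in> Xt"
  shows "Fb i g \<noteq> Ft t"
proof
  assume eq: "Fb i g = Ft t"
  obtain a b c d x y where t: "t = (a,b,c,d,x,y)" by (cases t) auto
  have tp: "a<m \<and> b<m \<and> c<m \<and> d<m \<and> a<c \<and> b\<noteq>d \<and> x<n \<and> y<n" using Xt_props assms(2) t by blast
  obtain p q r s where g: "p<n" "q<n" "r<n" "s<n"
      "Fb i g = {(enc n i p, enc n (sg i) q), (enc n i r, enc n (sg i) s)}"
    using Fb_explicit[OF assms(1), of i] by (elim exE conjE) (rule that)
  have e: "{(enc n i p, enc n (sg i) q), (enc n i r, enc n (sg i) s)} = {(enc n a x, enc n b (L1 x y)), (enc n c y, enc n d (L2 x y))}"
    using eq g(5) t Ft_simp by simp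
  have L: "L1 x y < n" "L2 x y < n" using L_less tp by auto
  from e have "(i = a \<and> i = c) \<or> (i = c \<and> i = a)"
    unfolding doubleton_eq_iff using g(1-4) tp L by (simp, blast)
  then show False using tp by auto
qed

lemma inj_tt:
  assumes "t\<in>Xt" "t'\<in>Xt" "Ft t = Ft t'"
  shows "t = t'"
proof -
  obtain a b c d x y where t: "t = (a,b,c,d,x,y)" by (cases t) auto
  obtain a' b' c' d' x' y' where t': "t' = (a',b',c',d',x',y')" by (cases t') auto
  have tp: "a<m \<and> b<m \<and> c<m \<and> d<m \<and> a<c \<and> b\<noteq>d \<and> x<n \<and> y<n" using Xt_props assms(1) t by blast
  have tp': "a'<m \<and> b'<m \<and> c'<m \<and> d'<m \<and> a'<c' \<and> b'\<noteq>d' \<and> x'<n \<and> y'<n" using Xt_props assms(2) t' by blast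
  have e: "{(enc n a x, enc n b (L1 x y)), (enc n c y, enc n d (L2 x y))} = {(enc n a' x', enc n b' (L1 x' y')), (enc n c' y', enc n d' (L2 x' y'))}"
    using assms(3) t t' Ft_simp by simp
  then have "(a=a' \<and> x=x' \<and> b=b' \<and> c=c' \<and> y=y' \<and> d=d') \<or> (a=c' \<and> c=a')"
    unfolding doubleton_eq_iff using tp tp' L_less[of x y] L_less[of x' y'] by (simp, blast)
  then show ?thesis using tp tp' t t' by auto
qed

lemma inj_FF: "inj_on FF XX"
proof (rule inj_onI)
  fix u v assume u: "u \<in> XX" and v: "v \<in> XX" and e: "FF u = FF v"
  show "u = v"
  proof (cases u)
    case (Inl ug)
    then obtain i g where ig: "u = Inl (i,g)" "i<m" "g\<in>S" using u unfolding XX_def Xb_def by auto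
    show ?thesis
    proof (cases v)
      case (Inl vh)
      then obtain j h where jh: "v = Inl (j,h)" "j<m" "h\<in>S" using v unfolding XX_def Xb_def by auto
      have "Fb i g = Fb j h" using e ig jh unfolding FF_def by simp
      then show ?thesis using inj_bb ig jh by blast
    next
      case (Inr t)
      then have "t \<in> Xt" using v unfolding XX_def by auto
      moreover have "Fb i g = Ft t" using e ig Inr unfolding FF_def by simp
      ultimately show ?thesis using inj_bt ig by blast
    qed
  next
    case (Inr t)
    then have t: "t \<in> Xt" using u unfolding XX_def by auto
    show ?thesis
    proof (cases v)
      case (Inl vh)
      then obtain j h where jh: "v = Inl (j,h)" "j<m" "h\<in>S" using v unfolding XX_def Xb_def by auto
      have "Fb j h = Ft t" using e jh Inr unfolding FF_def by simp
      then show ?thesis using inj_bt jh t by blast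
    next
      case (Inr t')
      then have "t' \<in> Xt" using v unfolding XX_def by auto
      moreover have "Ft t = Ft t'" using e \<open>u = Inr t\<close> Inr unfolding FF_def by simp
      ultimately show ?thesis using inj_tt t \<open>u = Inr t\<close> Inr by blast
    qed
  qed
qed

lemma count_FF: "card {g \<in> S'. Q g} = card {u \<in> XX. Q (FF u)}"
proof -
  have "{g \<in> S'. Q g} = FF ` {u \<in> XX. Q (FF u)}" unfolding S'_def by auto
  moreover have "inj_on FF {u \<in> XX. Q (FF u)}" using inj_FF by (rule inj_on_subset) auto
  ultimately show ?thesis by (simp add: card_image)
qed

end



context prod_setup begin

lemma bex_pair:
  "(\<exists>t\<in>{P,Q}. \<exists>u\<in>{P,Q}. t\<noteq>u \<and> R t \<and> R' u) \<longleftrightarrow> P \<noteq> Q \<and> ((R P \<and> R' Q) \<or> (R Q \<and> R' P))"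
  by auto

lemma Ft_mem:
  assumes "x<n" "z<n" "x'<n" "y'<n"
  shows "(enc n a x, enc n b z) \<in> Ft (a',b',c',d',x',y') \<longleftrightarrow>
     (a=a' \<and> x=x' \<and> b=b' \<and> z = L1 x' y') \<or> (a=c' \<and> x=y' \<and> b=d' \<and> z = L2 x' y')"
  using assms L_less[of x' y'] unfolding Ft_simp by (simp add: eq_commute[of z])

lemma Ft_mw:
  assumes "x<n" "w<n" "x'<n" "y'<n" "a'\<noteq>c'"
  shows "(\<exists>t\<in>Ft (a',b',c',d',x',y'). \<exists>u\<in>Ft (a',b',c',d',x',y'). t\<noteq>u \<and> fst t = enc n a x \<and> snd u = enc n b w) \<longleftrightarrow>
     (a=a' \<and> x=x' \<and> b=d' \<and> w = L2 x' y') \<or> (a=c' \<and> x=y' \<and> b=b' \<and> w = L1 x' y')"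
  unfolding Ft_simp bex_pair using assms L_less[of x' y'] by (simp add: eq_commute[of w] eq_commute[of a] eq_commute[of x] eq_commute[of b])

lemma Ft_mm:
  assumes "x<n" "y<n" "x'<n" "y'<n" "a'\<noteq>c'"
  shows "(\<exists>t\<in>Ft (a',b',c',d',x',y'). \<exists>u\<in>Ft (a',b',c',d',x',y'). t\<noteq>u \<and> fst t = enc n a x \<and> fst u = enc n c y) \<longleftrightarrow>
     (a=a' \<and> x=x' \<and> c=c' \<and> y=y') \<or> (a=c' \<and> x=y' \<and> c=a' \<and> y=x')"
  unfolding Ft_simp bex_pair using assms L_less[of x' y'] by (simp add: eq_commute[of a] eq_commute[of x] eq_commute[of c] eq_commute[of y])

lemma Ft_ww:
  assumes "z<n" "w<n" "x'<n" "y'<n" "a'\<noteq>c'"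
  shows "(\<exists>t\<in>Ft (a',b',c',d',x',y'). \<exists>u\<in>Ft (a',b',c',d',x',y'). t\<noteq>u \<and> snd t = enc n b z \<and> snd u = enc n d w) \<longleftrightarrow>
     (b=b' \<and> z=L1 x' y' \<and> d=d' \<and> w=L2 x' y') \<or> (b=d' \<and> z=L2 x' y' \<and> d=b' \<and> w=L1 x' y')"
  unfolding Ft_simp bex_pair using assms L_less[of x' y'] by (simp add: eq_commute[of b] eq_commute[of z] eq_commute[of d] eq_commute[of w])

lemma Fb_cases:
  assumes "g \<in> S"
  obtains p q r s where "g = {(p,q),(r,s)}" "p<n" "q<n" "r<n" "s<n" "p\<noteq>r" "q\<noteq>s"
     "Fb i g = {(enc n i p, enc n (sg i) q), (enc n i r, enc n (sg i) s)}"
  using Fb_explicit[OF assms, of i] by (elim exE conjE) (rule that)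

lemma Fb_mem:
  assumes "g \<in> S" "x<n" "z<n"
  shows "(enc n a x, enc n b z) \<in> Fb i g \<longleftrightarrow> a = i \<and> b = sg i \<and> (x,z) \<in> g"
proof -
  obtain p q r s where g: "g = {(p,q),(r,s)}" "p<n" "q<n" "r<n" "s<n" "p\<noteq>r" "q\<noteq>s"
     "Fb i g = {(enc n i p, enc n (sg i) q), (enc n i r, enc n (sg i) s)}" using Fb_cases[OF assms(1)] .
  show ?thesis unfolding g(8) unfolding g(1) using g(2-7) assms(2,3) by auto
qed

lemma Fb_mw:
  assumes "g \<in> S" "x<n" "w<n"
  shows "(\<exists>t\<in>Fb i g. \<exists>u\<in>Fb i g. t\<noteq>u \<and> fst t = enc n a x \<and> snd u = enc n b w)
     \<longleftrightarrow> a = i \<and> b = sg i \<and> (\<exists>t\<in>g. \<exists>u\<in>g. t\<noteq>u \<and> fst t = x \<and> snd u = w)"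
proof -
  obtain p q r s where g: "g = {(p,q),(r,s)}" "p<n" "q<n" "r<n" "s<n" "p\<noteq>r" "q\<noteq>s"
     "Fb i g = {(enc n i p, enc n (sg i) q), (enc n i r, enc n (sg i) s)}" using Fb_cases[OF assms(1)] .
  show ?thesis unfolding g(8) unfolding g(1) bex_pair using g(2-7) assms(2,3) by auto
qed

lemma Fb_mm:
  assumes "g \<in> S" "x<n" "y<n"
  shows "(\<exists>t\<in>Fb i g. \<exists>u\<in>Fb i g. t\<noteq>u \<and> fst t = enc n a x \<and> fst u = enc n c y)
     \<longleftrightarrow> a = i \<and> c = i \<and> (\<exists>t\<in>g. \<exists>u\<in>g. t\<noteq>u \<and> fst t = x \<and> fst u = y)"
proof -
  obtain p q r s where g: "g = {(p,q),(r,s)}" "p<n" "q<n" "r<n" "s<n" "p\<noteq>r" "q\<noteq>s"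
     "Fb i g = {(enc n i p, enc n (sg i) q), (enc n i r, enc n (sg i) s)}" using Fb_cases[OF assms(1)] .
  show ?thesis unfolding g(8) unfolding g(1) bex_pair using g(2-7) assms(2,3) by auto
qed

lemma Fb_ww:
  assumes "g \<in> S" "z<n" "w<n"
  shows "(\<exists>t\<in>Fb i g. \<exists>u\<in>Fb i g. t\<noteq>u \<and> snd t = enc n b z \<and> snd u = enc n d w)
     \<longleftrightarrow> b = sg i \<and> d = sg i \<and> (\<exists>t\<in>g. \<exists>u\<in>g. t\<noteq>u \<and> snd t = z \<and> snd u = w)"
proof -
  obtain p q r s where g: "g = {(p,q),(r,s)}" "p<n" "q<n" "r<n" "s<n" "p\<noteq>r" "q\<noteq>s"
     "Fb i g = {(enc n i p, enc n (sg i) q), (enc n i r, enc n (sg i) s)}" using Fb_cases[OF assms(1)] .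
  show ?thesis unfolding g(8) unfolding g(1) bex_pair using g(2-7) assms(2,3) by auto
qed

end



context prod_setup begin

lemma blk_generic:
  assumes "a<m" "\<And>i g. i<m \<Longrightarrow> g\<in>S \<Longrightarrow> i\<noteq>a \<Longrightarrow> \<not> Q (Fb i g)" "\<And>t. t\<in>Xt \<Longrightarrow> \<not> Q (Ft t)"
  shows "card {u\<in>XX. Q (FF u)} = card {g\<in>S. Q (Fb a g)}"
proof -
  have "{u\<in>XX. Q (FF u)} = (\<lambda>g. (Inl (a,g) :: nat \<times> game + nat\<times>nat\<times>nat\<times>nat\<times>nat\<times>nat)) ` {g\<in>S. Q (Fb a g)}"
  proof (rule set_eqI, rule iffI)
    fix u assume "u \<in> {u\<in>XX. Q (FF u)}"
    then have u: "u\<in>XX" "Q (FF u)" by auto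
    show "u \<in> (\<lambda>g. (Inl (a,g) :: nat \<times> game + nat\<times>nat\<times>nat\<times>nat\<times>nat\<times>nat)) ` {g\<in>S. Q (Fb a g)}"
    proof (cases u)
      case (Inl ig)
      then obtain i g where ig: "u = Inl (i,g)" "i<m" "g\<in>S" using u(1) unfolding XX_def Xb_def by auto
      then have q: "Q (Fb i g)" using u(2) unfolding FF_def by simp
      then have "i = a" using assms(2) ig by blast
      then show ?thesis using ig q by auto
    next
      case (Inr t)
      then have "t \<in> Xt" "Q (Ft t)" using u unfolding XX_def FF_def by auto
      then show ?thesis using assms(3) by blast
    qed
  next
    fix u assume "u \<in> (\<lambda>g. (Inl (a,g) :: nat \<times> game + nat\<times>nat\<times>nat\<times>nat\<times>nat\<times>nat)) ` {g\<in>S. Q (Fb a g)}"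
    then obtain g where "u = Inl (a,g)" "g\<in>S" "Q (Fb a g)" by auto
    then show "u \<in> {u\<in>XX. Q (FF u)}" unfolding XX_def Xb_def FF_def using assms(1) by auto
  qed
  moreover have "inj_on (\<lambda>g. (Inl (a,g) :: nat \<times> game + nat\<times>nat\<times>nat\<times>nat\<times>nat\<times>nat)) {g\<in>S. Q (Fb a g)}" by (auto simp: inj_on_def)
  ultimately show ?thesis by (simp add: card_image)
qed

lemma t1_generic:
  assumes "card {g\<in>Sm. R g} = 1"
   "\<And>i g. i<m \<Longrightarrow> g\<in>S \<Longrightarrow> \<not> Q (Fb i g)"
   "\<And>a b c d x y. (a,b,c,d,x,y)\<in>Xt \<Longrightarrow> Q (Ft (a,b,c,d,x,y)) \<Longrightarrow> R {(a,b),(c,d)}"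
   "\<And>a b c d. {(a,b),(c,d)}\<in>Sm \<Longrightarrow> a<c \<Longrightarrow> R {(a,b),(c,d)} \<Longrightarrow>
      \<exists>x<n. \<exists>y<n. Q (Ft (a,b,c,d,x,y)) \<and> (\<forall>x'<n. \<forall>y'<n. Q (Ft (a,b,c,d,x',y')) \<longrightarrow> x'=x \<and> y'=y)"
  shows "card {u\<in>XX. Q (FF u)} = 1"
proof -
  obtain g0 where g0: "{g\<in>Sm. R g} = {g0}" using assms(1) card_1_singletonE by blast
  then have g0S: "g0\<in>Sm" "R g0" by auto
  obtain a0 b0 c0 d0 where g0e: "g0 = {(a0,b0),(c0,d0)}" "a0<c0"
    using Sm_game[OF g0S(1)] by (elim exE conjE) (rule that)
  obtain x0 y0 where xy0: "x0<n" "y0<n" "Q (Ft (a0,b0,c0,d0,x0,y0))"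
     and uq: "\<forall>x'<n. \<forall>y'<n. Q (Ft (a0,b0,c0,d0,x',y')) \<longrightarrow> x'=x0 \<and> y'=y0"
    using assms(4)[of a0 b0 c0 d0] g0S g0e by blast
  have "{u\<in>XX. Q (FF u)} = {Inr (a0,b0,c0,d0,x0,y0)}"
  proof (rule set_eqI, rule iffI)
    fix u assume "u \<in> {u\<in>XX. Q (FF u)}"
    then have u: "u\<in>XX" "Q (FF u)" by auto
    show "u \<in> {Inr (a0,b0,c0,d0,x0,y0)}"
    proof (cases u)
      case (Inl ig)
      then obtain i g where ig: "u = Inl (i,g)" "i<m" "g\<in>S" using u(1) unfolding XX_def Xb_def by auto
      then have q: "Q (Fb i g)" using u(2) unfolding FF_def by simp
      then show ?thesis using assms(2) ig by blast
    next
      case (Inr t)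
      obtain a b c d x y where t: "t = (a,b,c,d,x,y)" by (cases t) auto
      have tX: "t \<in> Xt" "Q (Ft t)" using u Inr unfolding XX_def FF_def by auto
      have tp: "a<m \<and> b<m \<and> c<m \<and> d<m \<and> a<c \<and> b\<noteq>d \<and> x<n \<and> y<n \<and> {(a,b),(c,d)} \<in> Sm"
        using Xt_props tX(1) t by blast
      have "R {(a,b),(c,d)}" using assms(3) tX t by blast
      then have "{(a,b),(c,d)} \<in> {g\<in>Sm. R g}" using tp by blast
      then have "{(a,b),(c,d)} = g0" unfolding g0 by simp
      then have "{(a,b),(c,d)} = {(a0,b0),(c0,d0)}" unfolding g0e(1) .
      then have e: "a=a0 \<and> b=b0 \<and> c=c0 \<and> d=d0" using orient_eq[of a b c d a0 b0 c0 d0] tp g0e(2) by simp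
      have "Q (Ft (a0,b0,c0,d0,x,y))" using tX(2) t e by simp
      moreover have "x<n" "y<n" using tp by auto
      ultimately have "x = x0 \<and> y = y0" using uq by blast
      then show ?thesis using e Inr t by simp
    qed
  next
    fix u :: "nat \<times> game + nat\<times>nat\<times>nat\<times>nat\<times>nat\<times>nat" assume "u \<in> {Inr (a0,b0,c0,d0,x0,y0)}"
    then have "u = Inr (a0,b0,c0,d0,x0,y0)" by simp
    moreover have "(a0,b0,c0,d0,x0,y0) \<in> Xt" unfolding Xt_def using g0S g0e xy0 by simp
    ultimately show "u \<in> {u\<in>XX. Q (FF u)}" unfolding XX_def FF_def using xy0 by auto
  qed
  then show ?thesis by simp
qed

end



context prod_setup begin

lemma no_spouse: "{(a',b'),(c',d')} \<in> Sm \<Longrightarrow> i<m \<Longrightarrow> i = a' \<or> i = c' \<Longrightarrow> sg i = b' \<or> sg i = d' \<Longrightarrow> False"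
proof -
  assume g: "{(a',b'),(c',d')} \<in> Sm" "i<m" "i = a' \<or> i = c'" "sg i = b' \<or> sg i = d'"
  have "\<not> (plays_man {(a',b'),(c',d')} i \<and> plays_woman {(a',b'),(c',d')} (sg i))"
    using cmdrr_parts(3)[OF sa g(1) sg_spm[OF g(2)]] .
  moreover have "plays_man {(a',b'),(c',d')} i" using g(3) unfolding plays_man_def by auto
  moreover have "plays_woman {(a',b'),(c',d')} (sg i)" using g(4) unfolding plays_woman_def by auto
  ultimately show False by blast
qed

lemma part_blk:
  assumes "a<m" "x<n" "z<n"
  shows "partners S' (enc n a x) (enc n (sg a) z) = partners S x z"
proof -
  let ?Q = "\<lambda>g. (enc n a x, enc n (sg a) z) \<in> g"
  have "partners S' (enc n a x) (enc n (sg a) z) = card {u\<in>XX. ?Q (FF u)}"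
    unfolding partners_def by (rule count_FF)
  also have "\<dots> = card {g\<in>S. ?Q (Fb a g)}"
  proof (rule blk_generic[OF assms(1)])
    show "\<And>i g. i<m \<Longrightarrow> g\<in>S \<Longrightarrow> i\<noteq>a \<Longrightarrow> \<not> ?Q (Fb i g)" using Fb_mem assms by auto
    fix t assume t: "t \<in> Xt"
    obtain a' b' c' d' x' y' where te: "t = (a',b',c',d',x',y')" by (cases t) auto
    have tp: "a'<m \<and> b'<m \<and> c'<m \<and> d'<m \<and> a'<c' \<and> b'\<noteq>d' \<and> x'<n \<and> y'<n \<and> {(a',b'),(c',d')} \<in> Sm"
      using Xt_props t te by blast
    show "\<not> ?Q (Ft t)"
    proof
      assume "?Q (Ft t)"
      then have "(a=a' \<and> sg a = b') \<or> (a=c' \<and> sg a = d')" using Ft_mem[OF assms(2,3), of x' y' a "sg a" a' b' c' d'] tp te by auto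
      then show False using no_spouse[of a' b' c' d' a] tp assms(1) by auto
    qed
  qed
  also have "{g\<in>S. ?Q (Fb a g)} = {g\<in>S. (x,z) \<in> g}" using Fb_mem assms by auto
  finally show ?thesis unfolding partners_def .
qed

lemma mw_blk:
  assumes "a<m" "x<n" "w<n"
  shows "opp_mw S' (enc n a x) (enc n (sg a) w) = opp_mw S x w"
proof -
  let ?Q = "\<lambda>g. \<exists>t\<in>g. \<exists>u\<in>g. t \<noteq> u \<and> fst t = enc n a x \<and> snd u = enc n (sg a) w"
  have "opp_mw S' (enc n a x) (enc n (sg a) w) = card {u\<in>XX. ?Q (FF u)}"
    unfolding opp_mw_def by (rule count_FF)
  also have "\<dots> = card {g\<in>S. ?Q (Fb a g)}"
  proof (rule blk_generic[OF assms(1)])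
    show "\<And>i g. i<m \<Longrightarrow> g\<in>S \<Longrightarrow> i\<noteq>a \<Longrightarrow> \<not> ?Q (Fb i g)" using Fb_mw assms by auto
    fix t assume t: "t \<in> Xt"
    obtain a' b' c' d' x' y' where te: "t = (a',b',c',d',x',y')" by (cases t) auto
    have tp: "a'<m \<and> b'<m \<and> c'<m \<and> d'<m \<and> a'<c' \<and> b'\<noteq>d' \<and> x'<n \<and> y'<n \<and> {(a',b'),(c',d')} \<in> Sm"
      using Xt_props t te by blast
    show "\<not> ?Q (Ft t)"
    proof
      assume "?Q (Ft t)"
      moreover have "?Q (Ft (a',b',c',d',x',y')) \<longleftrightarrow> (a=a' \<and> x=x' \<and> sg a=d' \<and> w = L2 x' y') \<or> (a=c' \<and> x=y' \<and> sg a=b' \<and> w = L1 x' y')"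
        by (rule Ft_mw) (use tp assms in auto)
      ultimately have "(a=a' \<and> sg a = d') \<or> (a=c' \<and> sg a = b')" using te by auto
      then show False using no_spouse[of a' b' c' d' a] tp assms(1) by auto
    qed
  qed
  also have "{g\<in>S. ?Q (Fb a g)} = {g\<in>S. \<exists>t\<in>g. \<exists>u\<in>g. t \<noteq> u \<and> fst t = x \<and> snd u = w}"
  proof (rule Collect_cong)
    fix g
    show "(g \<in> S \<and> ?Q (Fb a g)) = (g \<in> S \<and> (\<exists>t\<in>g. \<exists>u\<in>g. t \<noteq> u \<and> fst t = x \<and> snd u = w))"
    proof (cases "g \<in> S")
      case True then show ?thesis using Fb_mw[OF True assms(2,3), of a a "sg a"] by simp
    qed simp
  qed
  finally show ?thesis unfolding opp_mw_def .
qed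

lemma mm_blk:
  assumes "a<m" "x<n" "y<n"
  shows "opp_mm S' (enc n a x) (enc n a y) = opp_mm S x y"
proof -
  let ?Q = "\<lambda>g. \<exists>t\<in>g. \<exists>u\<in>g. t \<noteq> u \<and> fst t = enc n a x \<and> fst u = enc n a y"
  have "opp_mm S' (enc n a x) (enc n a y) = card {u\<in>XX. ?Q (FF u)}"
    unfolding opp_mm_def by (rule count_FF)
  also have "\<dots> = card {g\<in>S. ?Q (Fb a g)}"
  proof (rule blk_generic[OF assms(1)])
    show "\<And>i g. i<m \<Longrightarrow> g\<in>S \<Longrightarrow> i\<noteq>a \<Longrightarrow> \<not> ?Q (Fb i g)" using Fb_mm assms by auto
    fix t assume t: "t \<in> Xt"
    obtain a' b' c' d' x' y' where te: "t = (a',b',c',d',x',y')" by (cases t) auto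
    have tp: "a'<m \<and> b'<m \<and> c'<m \<and> d'<m \<and> a'<c' \<and> b'\<noteq>d' \<and> x'<n \<and> y'<n \<and> {(a',b'),(c',d')} \<in> Sm"
      using Xt_props t te by blast
    show "\<not> ?Q (Ft t)"
    proof
      assume "?Q (Ft t)"
      moreover have "?Q (Ft (a',b',c',d',x',y')) \<longleftrightarrow> (a=a' \<and> x=x' \<and> a=c' \<and> y=y') \<or> (a=c' \<and> x=y' \<and> a=a' \<and> y=x')"
        by (rule Ft_mm) (use tp assms in auto)
      ultimately have "(a=a' \<and> a=c') \<or> (a=c' \<and> a=a')" using te by auto
      then show False using tp by auto
    qed
  qed
  also have "{g\<in>S. ?Q (Fb a g)} = {g\<in>S. \<exists>t\<in>g. \<exists>u\<in>g. t \<noteq> u \<and> fst t = x \<and> fst u = y}"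
  proof (rule Collect_cong)
    fix g
    show "(g \<in> S \<and> ?Q (Fb a g)) = (g \<in> S \<and> (\<exists>t\<in>g. \<exists>u\<in>g. t \<noteq> u \<and> fst t = x \<and> fst u = y))"
    proof (cases "g \<in> S")
      case True then show ?thesis using Fb_mm[OF True assms(2,3), of a a a] by simp
    qed simp
  qed
  finally show ?thesis unfolding opp_mm_def .
qed

lemma ww_blk:
  assumes "a<m" "z<n" "w<n"
  shows "opp_ww S' (enc n (sg a) z) (enc n (sg a) w) = opp_ww S z w"
proof -
  let ?Q = "\<lambda>g. \<exists>t\<in>g. \<exists>u\<in>g. t \<noteq> u \<and> snd t = enc n (sg a) z \<and> snd u = enc n (sg a) w"
  have "opp_ww S' (enc n (sg a) z) (enc n (sg a) w) = card {u\<in>XX. ?Q (FF u)}"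
    unfolding opp_ww_def by (rule count_FF)
  also have "\<dots> = card {g\<in>S. ?Q (Fb a g)}"
  proof (rule blk_generic[OF assms(1)])
    show "\<And>i g. i<m \<Longrightarrow> g\<in>S \<Longrightarrow> i\<noteq>a \<Longrightarrow> \<not> ?Q (Fb i g)" 
    proof
      fix i g assume ig: "i<m" "g\<in>S" "i\<noteq>a" "?Q (Fb i g)"
      then have "sg a = sg i" using Fb_ww[OF ig(2) assms(2,3)] by blast
      then show False using sg_inj ig assms(1) by metis
    qed
    fix t assume t: "t \<in> Xt"
    obtain a' b' c' d' x' y' where te: "t = (a',b',c',d',x',y')" by (cases t) auto
    have tp: "a'<m \<and> b'<m \<and> c'<m \<and> d'<m \<and> a'<c' \<and> b'\<noteq>d' \<and> x'<n \<and> y'<n \<and> {(a',b'),(c',d')} \<in> Sm"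
      using Xt_props t te by blast
    show "\<not> ?Q (Ft t)"
    proof
      assume "?Q (Ft t)"
      moreover have "?Q (Ft (a',b',c',d',x',y')) \<longleftrightarrow> (sg a=b' \<and> z=L1 x' y' \<and> sg a=d' \<and> w=L2 x' y') \<or> (sg a=d' \<and> z=L2 x' y' \<and> sg a=b' \<and> w=L1 x' y')"
        by (rule Ft_ww) (use tp assms in auto)
      ultimately have "(sg a=b' \<and> sg a=d') \<or> (sg a=d' \<and> sg a=b')" using te by auto
      then show False using tp by auto
    qed
  qed
  also have "{g\<in>S. ?Q (Fb a g)} = {g\<in>S. \<exists>t\<in>g. \<exists>u\<in>g. t \<noteq> u \<and> snd t = z \<and> snd u = w}"
  proof (rule Collect_cong)
    fix g
    show "(g \<in> S \<and> ?Q (Fb a g)) = (g \<in> S \<and> (\<exists>t\<in>g. \<exists>u\<in>g. t \<noteq> u \<and> snd t = z \<and> snd u = w))"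
    proof (cases "g \<in> S")
      case True then show ?thesis using Fb_ww[OF True assms(2,3), of a "sg a" "sg a"] by simp
    qed simp
  qed
  finally show ?thesis unfolding opp_ww_def .
qed

end



context prod_setup begin

lemma part_t1:
  assumes "a<m" "b<m" "b \<noteq> sg a" "x<n" "z<n"
  shows "partners S' (enc n a x) (enc n b z) = 1"
proof -
  let ?Q = "\<lambda>g. (enc n a x, enc n b z) \<in> g"
  have "partners S' (enc n a x) (enc n b z) = card {u\<in>XX. ?Q (FF u)}"
    unfolding partners_def by (rule count_FF)
  also have "\<dots> = 1"
  proof (rule t1_generic[where R = "\<lambda>g. (a,b) \<in> g"])
    have "(a,b) \<notin> spm" using spm_sg assms(3) by blast
    then show "card {g\<in>Sm. (a,b)\<in>g} = 1" using cmdrr_parts(4)[OF sa assms(1,2)] unfolding partners_def by simp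
    show "\<And>i g. i<m \<Longrightarrow> g\<in>S \<Longrightarrow> \<not> ?Q (Fb i g)" using Fb_mem assms by auto
  next
    fix a' b' c' d' x' y' assume t: "(a',b',c',d',x',y') \<in> Xt" "?Q (Ft (a',b',c',d',x',y'))"
    have tp: "a'<m \<and> b'<m \<and> c'<m \<and> d'<m \<and> a'<c' \<and> b'\<noteq>d' \<and> x'<n \<and> y'<n" using Xt_props t(1) by blast
    have "?Q (Ft (a',b',c',d',x',y')) \<longleftrightarrow> (a=a' \<and> x=x' \<and> b=b' \<and> z = L1 x' y') \<or> (a=c' \<and> x=y' \<and> b=d' \<and> z = L2 x' y')"
      by (rule Ft_mem) (use tp assms in auto)
    then show "(a,b) \<in> {(a',b'),(c',d')}" using t(2) by auto
  next
    fix a' b' c' d' assume g: "{(a',b'),(c',d')} \<in> Sm" "a'<c'" "(a,b) \<in> {(a',b'),(c',d')}"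
    have eq: "\<And>x' y'. x'<n \<Longrightarrow> y'<n \<Longrightarrow> ?Q (Ft (a',b',c',d',x',y')) \<longleftrightarrow> (a=a' \<and> x=x' \<and> b=b' \<and> z = L1 x' y') \<or> (a=c' \<and> x=y' \<and> b=d' \<and> z = L2 x' y')"
      by (rule Ft_mem) (use assms in auto)
    from g(3) consider "a=a' \<and> b=b'" | "a=c' \<and> b=d'" by auto
    then show "\<exists>x0<n. \<exists>y0<n. ?Q (Ft (a',b',c',d',x0,y0)) \<and> (\<forall>x'<n. \<forall>y'<n. ?Q (Ft (a',b',c',d',x',y')) \<longrightarrow> x'=x0 \<and> y'=y0)"
    proof cases
      case 1
      obtain y0 where y0: "y0<n" "L1 x y0 = z" "\<forall>y'<n. L1 x y' = z \<longrightarrow> y' = y0" using latin_row[OF l1 assms(4,5)] by blast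
      have ne: "a \<noteq> c'" using 1 g(2) by simp
      have q0: "?Q (Ft (a',b',c',d',x,y0))" using eq[OF assms(4) y0(1)] 1 y0(2) by simp
      have uq: "\<forall>x'<n. \<forall>y'<n. ?Q (Ft (a',b',c',d',x',y')) \<longrightarrow> x'=x \<and> y'=y0"
      proof (intro allI impI)
        fix x' y' assume h: "x'<n" "y'<n" "?Q (Ft (a',b',c',d',x',y'))"
        then have "x = x' \<and> z = L1 x' y'" using eq[OF h(1,2)] ne by simp
        then show "x'=x \<and> y'=y0" using y0(3) h(2) by auto
      qed
      show ?thesis using q0 uq assms(4) y0(1) by blast
    next
      case 2
      obtain x0 where x0: "x0<n" "L2 x0 x = z" "\<forall>x'<n. L2 x' x = z \<longrightarrow> x' = x0" using latin_col[OF l2 assms(4,5)] by blast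
      have ne: "a \<noteq> a'" using 2 g(2) by simp
      have q0: "?Q (Ft (a',b',c',d',x0,x))" using eq[OF x0(1) assms(4)] 2 x0(2) by simp
      have uq: "\<forall>x'<n. \<forall>y'<n. ?Q (Ft (a',b',c',d',x',y')) \<longrightarrow> x'=x0 \<and> y'=x"
      proof (intro allI impI)
        fix x' y' assume h: "x'<n" "y'<n" "?Q (Ft (a',b',c',d',x',y'))"
        then have "x = y' \<and> z = L2 x' y'" using eq[OF h(1,2)] ne by simp
        then show "x'=x0 \<and> y'=x" using x0(3) h(1) by auto
      qed
      show ?thesis using q0 uq assms(4) x0(1) by blast
    qed
  qed
  finally show ?thesis .
qed

lemma mw_t1:
  assumes "a<m" "b<m" "b \<noteq> sg a" "x<n" "w<n"
  shows "opp_mw S' (enc n a x) (enc n b w) = 1"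
proof -
  let ?Q = "\<lambda>g. \<exists>t\<in>g. \<exists>u\<in>g. t \<noteq> u \<and> fst t = enc n a x \<and> snd u = enc n b w"
  let ?R = "\<lambda>g. \<exists>t\<in>g. \<exists>u\<in>g. t \<noteq> u \<and> fst t = a \<and> snd u = b"
  have "opp_mw S' (enc n a x) (enc n b w) = card {u\<in>XX. ?Q (FF u)}"
    unfolding opp_mw_def by (rule count_FF)
  also have "\<dots> = 1"
  proof (rule t1_generic[where R = ?R])
    have "(a,b) \<notin> spm" using spm_sg assms(3) by blast
    then show "card {g\<in>Sm. ?R g} = 1" using cmdrr_parts(5)[OF sa assms(1,2)] unfolding opp_mw_def by simp
    show "\<And>i g. i<m \<Longrightarrow> g\<in>S \<Longrightarrow> \<not> ?Q (Fb i g)" using Fb_mw assms by auto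
  next
    fix a' b' c' d' x' y' assume t: "(a',b',c',d',x',y') \<in> Xt" "?Q (Ft (a',b',c',d',x',y'))"
    have tp: "a'<m \<and> b'<m \<and> c'<m \<and> d'<m \<and> a'<c' \<and> b'\<noteq>d' \<and> x'<n \<and> y'<n" using Xt_props t(1) by blast
    have "?Q (Ft (a',b',c',d',x',y')) \<longleftrightarrow> (a=a' \<and> x=x' \<and> b=d' \<and> w = L2 x' y') \<or> (a=c' \<and> x=y' \<and> b=b' \<and> w = L1 x' y')"
      by (rule Ft_mw) (use tp assms in auto)
    then have "(a=a' \<and> b=d') \<or> (a=c' \<and> b=b')" using t(2) by auto
    then show "?R {(a',b'),(c',d')}" unfolding bex_pair using tp by auto
  next
    fix a' b' c' d' assume g: "{(a',b'),(c',d')} \<in> Sm" "a'<c'" "?R {(a',b'),(c',d')}"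
    have eq: "\<And>x' y'. x'<n \<Longrightarrow> y'<n \<Longrightarrow> ?Q (Ft (a',b',c',d',x',y')) \<longleftrightarrow> (a=a' \<and> x=x' \<and> b=d' \<and> w = L2 x' y') \<or> (a=c' \<and> x=y' \<and> b=b' \<and> w = L1 x' y')"
      by (rule Ft_mw) (use assms g(2) in auto)
    from g(3) consider "a=a' \<and> b=d'" | "a=c' \<and> b=b'" unfolding bex_pair by auto
    then show "\<exists>x0<n. \<exists>y0<n. ?Q (Ft (a',b',c',d',x0,y0)) \<and> (\<forall>x'<n. \<forall>y'<n. ?Q (Ft (a',b',c',d',x',y')) \<longrightarrow> x'=x0 \<and> y'=y0)"
    proof cases
      case 1
      obtain y0 where y0: "y0<n" "L2 x y0 = w" "\<forall>y'<n. L2 x y' = w \<longrightarrow> y' = y0" using latin_row[OF l2 assms(4,5)] by blast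
      have ne: "a \<noteq> c'" using 1 g(2) by simp
      have q0: "?Q (Ft (a',b',c',d',x,y0))" using eq[OF assms(4) y0(1)] 1 y0(2) by simp
      have uq: "\<forall>x'<n. \<forall>y'<n. ?Q (Ft (a',b',c',d',x',y')) \<longrightarrow> x'=x \<and> y'=y0"
      proof (intro allI impI)
        fix x' y' assume h: "x'<n" "y'<n" "?Q (Ft (a',b',c',d',x',y'))"
        then have "x = x' \<and> w = L2 x' y'" using eq[OF h(1,2)] ne by simp
        then show "x'=x \<and> y'=y0" using y0(3) h(2) by auto
      qed
      show ?thesis using q0 uq assms(4) y0(1) by blast
    next
      case 2
      obtain x0 where x0: "x0<n" "L1 x0 x = w" "\<forall>x'<n. L1 x' x = w \<longrightarrow> x' = x0" using latin_col[OF l1 assms(4,5)] by blast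
      have ne: "a \<noteq> a'" using 2 g(2) by simp
      have q0: "?Q (Ft (a',b',c',d',x0,x))" using eq[OF x0(1) assms(4)] 2 x0(2) by simp
      have uq: "\<forall>x'<n. \<forall>y'<n. ?Q (Ft (a',b',c',d',x',y')) \<longrightarrow> x'=x0 \<and> y'=x"
      proof (intro allI impI)
        fix x' y' assume h: "x'<n" "y'<n" "?Q (Ft (a',b',c',d',x',y'))"
        then have "x = y' \<and> w = L1 x' y'" using eq[OF h(1,2)] ne by simp
        then show "x'=x0 \<and> y'=x" using x0(3) h(1) by auto
      qed
      show ?thesis using q0 uq assms(4) x0(1) by blast
    qed
  qed
  finally show ?thesis .
qed

lemma mm_t1:
  assumes "a<m" "c<m" "a \<noteq> c" "x<n" "y<n"
  shows "opp_mm S' (enc n a x) (enc n c y) = 1"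
proof -
  let ?Q = "\<lambda>g. \<exists>t\<in>g. \<exists>u\<in>g. t \<noteq> u \<and> fst t = enc n a x \<and> fst u = enc n c y"
  let ?R = "\<lambda>g. \<exists>t\<in>g. \<exists>u\<in>g. t \<noteq> u \<and> fst t = a \<and> fst u = c"
  have "opp_mm S' (enc n a x) (enc n c y) = card {u\<in>XX. ?Q (FF u)}"
    unfolding opp_mm_def by (rule count_FF)
  also have "\<dots> = 1"
  proof (rule t1_generic[where R = ?R])
    have "has_spouse_m spm a" using sg_spm[OF assms(1)] unfolding has_spouse_m_def by blast
    then show "card {g\<in>Sm. ?R g} = 1" using cmdrr_parts(6)[OF sa assms(1) _ assms(2)] assms(3) unfolding opp_mm_def by simp
    show "\<And>i g. i<m \<Longrightarrow> g\<in>S \<Longrightarrow> \<not> ?Q (Fb i g)" using Fb_mm assms by auto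
  next
    fix a' b' c' d' x' y' assume t: "(a',b',c',d',x',y') \<in> Xt" "?Q (Ft (a',b',c',d',x',y'))"
    have tp: "a'<m \<and> b'<m \<and> c'<m \<and> d'<m \<and> a'<c' \<and> b'\<noteq>d' \<and> x'<n \<and> y'<n" using Xt_props t(1) by blast
    have "?Q (Ft (a',b',c',d',x',y')) \<longleftrightarrow> (a=a' \<and> x=x' \<and> c=c' \<and> y=y') \<or> (a=c' \<and> x=y' \<and> c=a' \<and> y=x')"
      by (rule Ft_mm) (use tp assms in auto)
    then have "(a=a' \<and> c=c') \<or> (a=c' \<and> c=a')" using t(2) by auto
    then show "?R {(a',b'),(c',d')}" unfolding bex_pair using tp by auto
  next
    fix a' b' c' d' assume g: "{(a',b'),(c',d')} \<in> Sm" "a'<c'" "?R {(a',b'),(c',d')}"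
    have eq: "\<And>x' y'. x'<n \<Longrightarrow> y'<n \<Longrightarrow> ?Q (Ft (a',b',c',d',x',y')) \<longleftrightarrow> (a=a' \<and> x=x' \<and> c=c' \<and> y=y') \<or> (a=c' \<and> x=y' \<and> c=a' \<and> y=x')"
      by (rule Ft_mm) (use assms g(2) in auto)
    from g(3) consider "a=a' \<and> c=c'" | "a=c' \<and> c=a'" unfolding bex_pair by auto
    then show "\<exists>x0<n. \<exists>y0<n. ?Q (Ft (a',b',c',d',x0,y0)) \<and> (\<forall>x'<n. \<forall>y'<n. ?Q (Ft (a',b',c',d',x',y')) \<longrightarrow> x'=x0 \<and> y'=y0)"
    proof cases
      case 1
      have ne: "a \<noteq> c'" using 1 g(2) by simp
      have q0: "?Q (Ft (a',b',c',d',x,y))" using eq[OF assms(4,5)] 1 by simp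
      have uq: "\<forall>x'<n. \<forall>y'<n. ?Q (Ft (a',b',c',d',x',y')) \<longrightarrow> x'=x \<and> y'=y"
      proof (intro allI impI)
        fix x' y' assume h: "x'<n" "y'<n" "?Q (Ft (a',b',c',d',x',y'))"
        then show "x'=x \<and> y'=y" using eq[OF h(1,2)] ne by auto
      qed
      show ?thesis using q0 uq assms(4,5) by blast
    next
      case 2
      have ne: "a \<noteq> a'" using 2 g(2) by simp
      have q0: "?Q (Ft (a',b',c',d',y,x))" using eq[OF assms(5,4)] 2 by simp
      have uq: "\<forall>x'<n. \<forall>y'<n. ?Q (Ft (a',b',c',d',x',y')) \<longrightarrow> x'=y \<and> y'=x"
      proof (intro allI impI)
        fix x' y' assume h: "x'<n" "y'<n" "?Q (Ft (a',b',c',d',x',y'))"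
        then show "x'=y \<and> y'=x" using eq[OF h(1,2)] ne by auto
      qed
      show ?thesis using q0 uq assms(4,5) by blast
    qed
  qed
  finally show ?thesis .
qed

lemma ww_t1:
  assumes "b<m" "d<m" "b \<noteq> d" "z<n" "w<n"
  shows "opp_ww S' (enc n b z) (enc n d w) = 1"
proof -
  let ?Q = "\<lambda>g. \<exists>t\<in>g. \<exists>u\<in>g. t \<noteq> u \<and> snd t = enc n b z \<and> snd u = enc n d w"
  let ?R = "\<lambda>g. \<exists>t\<in>g. \<exists>u\<in>g. t \<noteq> u \<and> snd t = b \<and> snd u = d"
  have "opp_ww S' (enc n b z) (enc n d w) = card {u\<in>XX. ?Q (FF u)}"
    unfolding opp_ww_def by (rule count_FF)
  also have "\<dots> = 1"
  proof (rule t1_generic[where R = ?R])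
    obtain a where "a<m" "sg a = b" using sg_surj[OF assms(1)] by blast
    then have "has_spouse_w spm b" using sg_spm unfolding has_spouse_w_def by blast
    then show "card {g\<in>Sm. ?R g} = 1" using cmdrr_parts(8)[OF sa assms(1) _ assms(2)] assms(3) unfolding opp_ww_def by simp
    show "\<And>i g. i<m \<Longrightarrow> g\<in>S \<Longrightarrow> \<not> ?Q (Fb i g)" using Fb_ww assms by auto
  next
    fix a' b' c' d' x' y' assume t: "(a',b',c',d',x',y') \<in> Xt" "?Q (Ft (a',b',c',d',x',y'))"
    have tp: "a'<m \<and> b'<m \<and> c'<m \<and> d'<m \<and> a'<c' \<and> b'\<noteq>d' \<and> x'<n \<and> y'<n" using Xt_props t(1) by blast
    have "?Q (Ft (a',b',c',d',x',y')) \<longleftrightarrow> (b=b' \<and> z=L1 x' y' \<and> d=d' \<and> w=L2 x' y') \<or> (b=d' \<and> z=L2 x' y' \<and> d=b' \<and> w=L1 x' y')"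
      by (rule Ft_ww) (use tp assms in auto)
    then have "(b=b' \<and> d=d') \<or> (b=d' \<and> d=b')" using t(2) by auto
    then show "?R {(a',b'),(c',d')}" unfolding bex_pair using tp by auto
  next
    fix a' b' c' d' assume g: "{(a',b'),(c',d')} \<in> Sm" "a'<c'" "?R {(a',b'),(c',d')}"
    have eq: "\<And>x' y'. x'<n \<Longrightarrow> y'<n \<Longrightarrow> ?Q (Ft (a',b',c',d',x',y')) \<longleftrightarrow> (b=b' \<and> z=L1 x' y' \<and> d=d' \<and> w=L2 x' y') \<or> (b=d' \<and> z=L2 x' y' \<and> d=b' \<and> w=L1 x' y')"
      by (rule Ft_ww) (use assms g(2) in auto)
    from g(3) consider "b=b' \<and> d=d'" | "b=d' \<and> d=b'" unfolding bex_pair by auto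
    then show "\<exists>x0<n. \<exists>y0<n. ?Q (Ft (a',b',c',d',x0,y0)) \<and> (\<forall>x'<n. \<forall>y'<n. ?Q (Ft (a',b',c',d',x',y')) \<longrightarrow> x'=x0 \<and> y'=y0)"
    proof cases
      case 1
      obtain x0 y0 where o: "x0<n" "y0<n" "L1 x0 y0 = z" "L2 x0 y0 = w"
        "\<forall>x'<n. \<forall>y'<n. L1 x' y' = z \<and> L2 x' y' = w \<longrightarrow> x' = x0 \<and> y' = y0"
        using orth_ex[OF assms(4,5)] by blast
      have ne: "b \<noteq> d'" using 1 assms(3) by simp
      have q0: "?Q (Ft (a',b',c',d',x0,y0))" using eq[OF o(1,2)] 1 o(3,4) by simp
      have uq: "\<forall>x'<n. \<forall>y'<n. ?Q (Ft (a',b',c',d',x',y')) \<longrightarrow> x'=x0 \<and> y'=y0"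
      proof (intro allI impI)
        fix x' y' assume h: "x'<n" "y'<n" "?Q (Ft (a',b',c',d',x',y'))"
        then have "z = L1 x' y' \<and> w = L2 x' y'" using eq[OF h(1,2)] ne by simp
        then show "x'=x0 \<and> y'=y0" using o(5) h(1,2) by auto
      qed
      show ?thesis using q0 uq o(1,2) by blast
    next
      case 2
      obtain x0 y0 where o: "x0<n" "y0<n" "L1 x0 y0 = w" "L2 x0 y0 = z"
        "\<forall>x'<n. \<forall>y'<n. L1 x' y' = w \<and> L2 x' y' = z \<longrightarrow> x' = x0 \<and> y' = y0"
        using orth_ex[OF assms(5,4)] by blast
      have ne: "b \<noteq> b'" using 2 assms(3) by simp
      have q0: "?Q (Ft (a',b',c',d',x0,y0))" using eq[OF o(1,2)] 2 o(3,4) by simp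
      have uq: "\<forall>x'<n. \<forall>y'<n. ?Q (Ft (a',b',c',d',x',y')) \<longrightarrow> x'=x0 \<and> y'=y0"
      proof (intro allI impI)
        fix x' y' assume h: "x'<n" "y'<n" "?Q (Ft (a',b',c',d',x',y'))"
        then have "z = L2 x' y' \<and> w = L1 x' y'" using eq[OF h(1,2)] ne by simp
        then show "x'=x0 \<and> y'=y0" using o(5) h(1,2) by auto
      qed
      show ?thesis using q0 uq o(1,2) by blast
    qed
  qed
  finally show ?thesis .
qed

end



context prod_setup begin

lemma sp_props: "sp \<subseteq> {..<n} \<times> {..<n}" "card sp = k" "\<And>p q. p \<in> sp \<Longrightarrow> q \<in> sp \<Longrightarrow> fst p = fst q \<longleftrightarrow> snd p = snd q"
  using cmdrr_parts(1)[OF cm] unfolding spouse_pairs_def by auto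

lemma sp'_mem:
  assumes "a<m" "x<n" "z<n"
  shows "(enc n a x, enc n b z) \<in> sp' \<longleftrightarrow> b = sg a \<and> (x,z) \<in> sp"
proof
  assume "(enc n a x, enc n b z) \<in> sp'"
  then obtain i p q where "i<m" "(p,q) \<in> sp" "enc n a x = enc n i p" "enc n b z = enc n (sg i) q"
    unfolding sp'_def by auto
  moreover have "p<n" "q<n" using sp_props(1) \<open>(p,q)\<in>sp\<close> by auto
  ultimately show "b = sg a \<and> (x,z) \<in> sp" using assms by auto
next
  assume "b = sg a \<and> (x,z) \<in> sp"
  then show "(enc n a x, enc n b z) \<in> sp'" unfolding sp'_def using assms(1) by force
qed

lemma sp'_elem:
  assumes "P \<in> sp'"
  obtains i x y where "i<m" "(x,y)\<in>sp" "x<n" "y<n" "P = (enc n i x, enc n (sg i) y)"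
proof -
  obtain i x y where "i<m" "(x,y)\<in>sp" "P = (enc n i x, enc n (sg i) y)" using assms unfolding sp'_def by auto
  moreover have "x<n" "y<n" using sp_props(1) \<open>(x,y)\<in>sp\<close> by auto
  ultimately show ?thesis using that by blast
qed

lemma hs_m:
  assumes "a<m" "x<n"
  shows "has_spouse_m sp' (enc n a x) \<longleftrightarrow> has_spouse_m sp x"
proof
  assume "has_spouse_m sp' (enc n a x)"
  then obtain Y where "(enc n a x, Y) \<in> sp'" unfolding has_spouse_m_def by auto
  then obtain i p q where "i<m" "(p,q)\<in>sp" "p<n" "q<n" "(enc n a x, Y) = (enc n i p, enc n (sg i) q)"
    by (rule sp'_elem)
  then show "has_spouse_m sp x" unfolding has_spouse_m_def using assms by auto
next
  assume "has_spouse_m sp x"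
  then obtain y where "(x,y)\<in>sp" unfolding has_spouse_m_def by auto
  then have "(enc n a x, enc n (sg a) y) \<in> sp'" unfolding sp'_def using assms by force
  then show "has_spouse_m sp' (enc n a x)" unfolding has_spouse_m_def by auto
qed

lemma hs_w:
  assumes "a<m" "z<n"
  shows "has_spouse_w sp' (enc n (sg a) z) \<longleftrightarrow> has_spouse_w sp z"
proof
  assume "has_spouse_w sp' (enc n (sg a) z)"
  then obtain X where "(X, enc n (sg a) z) \<in> sp'" unfolding has_spouse_w_def by auto
  then obtain i p q where "i<m" "(p,q)\<in>sp" "p<n" "q<n" "(X, enc n (sg a) z) = (enc n i p, enc n (sg i) q)"
    by (rule sp'_elem)
  then show "has_spouse_w sp z" unfolding has_spouse_w_def using assms by auto
next
  assume "has_spouse_w sp z"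
  then obtain x where "(x,z)\<in>sp" unfolding has_spouse_w_def by auto
  then have "(enc n a x, enc n (sg a) z) \<in> sp'" unfolding sp'_def using assms by force
  then show "has_spouse_w sp' (enc n (sg a) z)" unfolding has_spouse_w_def by auto
qed

lemma woman_dec:
  assumes "B < m*n"
  obtains a z where "a<m" "z<n" "B = enc n (sg a) z"
proof -
  obtain b z where "b<m" "z<n" "B = enc n b z" using enc_surj[OF assms] by blast
  moreover obtain a where "a<m" "sg a = b" using sg_surj[OF \<open>b<m\<close>] by blast
  ultimately show ?thesis using that by blast
qed

lemma man_dec:
  assumes "A < m*n"
  obtains a x where "a<m" "x<n" "A = enc n a x"
  using enc_surj[OF assms] by blast

lemma spouse_ok: "spouse_pairs (m*n) (m*k) sp'"
proof -
  let ?f = "\<lambda>(i,x,y). (enc n i x, enc n (sg i) y)"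
  have inj: "inj_on ?f ({..<m} \<times> sp)"
  proof (rule inj_onI)
    fix u v assume u: "u \<in> {..<m} \<times> sp" and v: "v \<in> {..<m} \<times> sp" and e: "?f u = ?f v"
    obtain i x y where ue: "u = (i,x,y)" by (cases u) auto
    obtain j x' y' where ve: "v = (j,x',y')" by (cases v) auto
    have b: "x<n" "y<n" "x'<n" "y'<n" using u v ue ve sp_props(1) by auto
    show "u = v" using e ue ve b by auto
  qed
  have "card sp' = m*k" unfolding sp'_def using card_image[OF inj] sp_props(2) by (simp add: card_cartesian_product)
  moreover have "sp' \<subseteq> {..<m*n} \<times> {..<m*n}"
  proof
    fix P assume "P \<in> sp'"
    then obtain i x y where "i<m" "x<n" "y<n" "P = (enc n i x, enc n (sg i) y)" by (rule sp'_elem)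
    then show "P \<in> {..<m*n} \<times> {..<m*n}" using enc_less sg_less by auto
  qed
  moreover have "\<forall>p\<in>sp'. \<forall>q\<in>sp'. fst p = fst q \<longleftrightarrow> snd p = snd q"
  proof (intro ballI)
    fix P Q assume "P\<in>sp'" "Q\<in>sp'"
    obtain i x y where P: "i<m" "(x,y)\<in>sp" "x<n" "y<n" "P = (enc n i x, enc n (sg i) y)" using \<open>P\<in>sp'\<close> by (rule sp'_elem)
    obtain j x' y' where Q: "j<m" "(x',y')\<in>sp" "x'<n" "y'<n" "Q = (enc n j x', enc n (sg j) y')" using \<open>Q\<in>sp'\<close> by (rule sp'_elem)
    have m1: "x = x' \<longleftrightarrow> y = y'" using sp_props(3)[OF P(2) Q(2)] by simp
    have m2: "sg i = sg j \<longleftrightarrow> i = j" using sg_inj P(1) Q(1) by auto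
    show "fst P = fst Q \<longleftrightarrow> snd P = snd Q" using P Q m1 m2 by auto
  qed
  ultimately show ?thesis unfolding spouse_pairs_def by blast
qed

lemma games_ok: "g \<in> S' \<Longrightarrow> is_game (m*n) g"
proof -
  assume "g \<in> S'"
  then obtain u where u: "u \<in> XX" "g = FF u" unfolding S'_def by auto
  show ?thesis
  proof (cases u)
    case (Inl ig)
    then obtain i h where ih: "u = Inl (i,h)" "i<m" "h\<in>S" using u(1) unfolding XX_def Xb_def by auto
    obtain p q r s where h: "h = {(p,q),(r,s)}" "p<n" "q<n" "r<n" "s<n" "p\<noteq>r" "q\<noteq>s"
      "Fb i h = {(enc n i p, enc n (sg i) q), (enc n i r, enc n (sg i) s)}" using Fb_cases[OF ih(3)] .
    have g: "g = {(enc n i p, enc n (sg i) q), (enc n i r, enc n (sg i) s)}" using u(2) ih(1) h(8) unfolding FF_def by simp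
    show ?thesis unfolding is_game_def g
      apply (rule exI[of _ "enc n i p"], rule exI[of _ "enc n (sg i) q"], rule exI[of _ "enc n i r"], rule exI[of _ "enc n (sg i) s"])
      using h(2-7) enc_less[OF ih(2) h(2)] enc_less[OF ih(2) h(4)] enc_less[OF sg_less[OF ih(2)] h(3)] enc_less[OF sg_less[OF ih(2)] h(5)] by auto
  next
    case (Inr t)
    obtain a b c d x y where te: "t = (a,b,c,d,x,y)" by (cases t) auto
    have "t \<in> Xt" using u(1) Inr unfolding XX_def by auto
    then have tp: "a<m \<and> b<m \<and> c<m \<and> d<m \<and> a<c \<and> b\<noteq>d \<and> x<n \<and> y<n" using Xt_props te by blast
    have L: "L1 x y < n" "L2 x y < n" using L_less tp by auto
    have g: "g = {(enc n a x, enc n b (L1 x y)), (enc n c y, enc n d (L2 x y))}" using u(2) Inr te Ft_simp unfolding FF_def by simp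
    show ?thesis unfolding is_game_def g
      apply (rule exI[of _ "enc n a x"], rule exI[of _ "enc n b (L1 x y)"], rule exI[of _ "enc n c y"], rule exI[of _ "enc n d (L2 x y)"])
      using tp L enc_less[of a m x n] enc_less[of c m y n] enc_less[of b m "L1 x y" n] enc_less[of d m "L2 x y" n] by auto
  qed
qed

lemma avoid_ok: "g \<in> S' \<Longrightarrow> (X,Y) \<in> sp' \<Longrightarrow> \<not> (plays_man g X \<and> plays_woman g Y)"
proof
  assume gS: "g \<in> S'" and sp: "(X,Y) \<in> sp'" and pl: "plays_man g X \<and> plays_woman g Y"
  obtain i x y where P: "i<m" "(x,y)\<in>sp" "x<n" "y<n" "(X,Y) = (enc n i x, enc n (sg i) y)" using sp by (rule sp'_elem)
  obtain u where u: "u \<in> XX" "g = FF u" using gS unfolding S'_def by auto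
  show False
  proof (cases u)
    case (Inl ig)
    then obtain j h where jh: "u = Inl (j,h)" "j<m" "h\<in>S" using u(1) unfolding XX_def Xb_def by auto
    obtain p q r s where h: "h = {(p,q),(r,s)}" "p<n" "q<n" "r<n" "s<n" "p\<noteq>r" "q\<noteq>s"
      "Fb j h = {(enc n j p, enc n (sg j) q), (enc n j r, enc n (sg j) s)}" using Fb_cases[OF jh(3)] .
    have g: "g = {(enc n j p, enc n (sg j) q), (enc n j r, enc n (sg j) s)}" using u(2) jh(1) h(8) unfolding FF_def by simp
    have "enc n i x = enc n j p \<or> enc n i x = enc n j r" using pl P(5) unfolding g plays_man_def by auto
    then have "x = p \<or> x = r" using P h by auto
    then have pm: "plays_man h x" unfolding h(1) plays_man_def by auto
    have "enc n (sg i) y = enc n (sg j) q \<or> enc n (sg i) y = enc n (sg j) s" using pl P(5) unfolding g plays_woman_def by auto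
    then have "y = q \<or> y = s" using P h by auto
    then have pw: "plays_woman h y" unfolding h(1) plays_woman_def by auto
    show False using cmdrr_parts(3)[OF cm jh(3) P(2)] pm pw by blast
  next
    case (Inr t)
    obtain a b c d x' y' where te: "t = (a,b,c,d,x',y')" by (cases t) auto
    have "t \<in> Xt" using u(1) Inr unfolding XX_def by auto
    then have tp: "a<m \<and> b<m \<and> c<m \<and> d<m \<and> a<c \<and> b\<noteq>d \<and> x'<n \<and> y'<n \<and> {(a,b),(c,d)} \<in> Sm"
      using Xt_props te by blast
    have L: "L1 x' y' < n" "L2 x' y' < n" using L_less tp by auto
    have g: "g = {(enc n a x', enc n b (L1 x' y')), (enc n c y', enc n d (L2 x' y'))}" using u(2) Inr te Ft_simp unfolding FF_def by simp
    have "enc n i x = enc n a x' \<or> enc n i x = enc n c y'" using pl P(5) unfolding g plays_man_def by auto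
    then have "i = a \<or> i = c" using P tp by auto
    moreover have "enc n (sg i) y = enc n b (L1 x' y') \<or> enc n (sg i) y = enc n d (L2 x' y')" using pl P(5) unfolding g plays_woman_def by auto
    then have "sg i = b \<or> sg i = d" using P L by auto
    ultimately show False using no_spouse[of a b c d i] tp P(1) by blast
  qed
qed

lemma main: "is_cmdrr (m*n) (m*k) sp' S'"
  unfolding is_cmdrr_def
proof (intro conjI)
  show "spouse_pairs (m*n) (m*k) sp'" by (rule spouse_ok)
  show "\<forall>g\<in>S'. is_game (m*n) g" using games_ok by blast
  show "\<forall>g\<in>S'. \<forall>(x,y)\<in>sp'. \<not> (plays_man g x \<and> plays_woman g y)" using avoid_ok by blast
  show "\<forall>A<m*n. \<forall>B<m*n. (A,B) \<notin> sp' \<longrightarrow> partners S' A B = 1 \<and> opp_mw S' A B = 1"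
  proof (intro allI impI)
    fix A B assume A: "A < m*n" and B: "B < m*n" and nsp: "(A,B) \<notin> sp'"
    obtain a x where ax: "a<m" "x<n" "A = enc n a x" using man_dec[OF A] by blast
    obtain b z where bz: "b<m" "z<n" "B = enc n b z" using man_dec[OF B] by blast
    show "partners S' A B = 1 \<and> opp_mw S' A B = 1"
    proof (cases "b = sg a")
      case True
      then have "(x,z) \<notin> sp" using nsp sp'_mem[OF ax(1,2) bz(2)] ax bz by simp
      then show ?thesis using part_blk[OF ax(1,2) bz(2)] mw_blk[OF ax(1,2) bz(2)]
          cmdrr_parts(4,5)[OF cm ax(2) bz(2)] ax bz True by simp
    next
      case False
      then show ?thesis using part_t1[OF ax(1) bz(1) False ax(2) bz(2)] mw_t1[OF ax(1) bz(1) False ax(2) bz(2)] ax bz by simp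
    qed
  qed
  show "\<forall>A<m*n. has_spouse_m sp' A \<longrightarrow> (\<forall>C<m*n. C \<noteq> A \<longrightarrow> opp_mm S' A C = 1)"
  proof (intro allI impI)
    fix A C assume A: "A < m*n" and hs: "has_spouse_m sp' A" and C: "C < m*n" and ne: "C \<noteq> A"
    obtain a x where ax: "a<m" "x<n" "A = enc n a x" using man_dec[OF A] by blast
    obtain c y where cy: "c<m" "y<n" "C = enc n c y" using man_dec[OF C] by blast
    have hs': "has_spouse_m sp x" using hs hs_m[OF ax(1,2)] ax(3) by simp
    show "opp_mm S' A C = 1"
    proof (cases "c = a")
      case True
      then have "y \<noteq> x" using ne ax cy by auto
      then show ?thesis using mm_blk[OF ax(1,2) cy(2)] cmdrr_parts(6)[OF cm ax(2) hs' cy(2)] ax cy True by simp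
    next
      case False
      then show ?thesis using mm_t1[OF ax(1) cy(1) _ ax(2) cy(2)] ax cy by auto
    qed
  qed
  show "\<forall>A<m*n. \<not> has_spouse_m sp' A \<longrightarrow>
        (\<exists>C<m*n. C \<noteq> A \<and> \<not> has_spouse_m sp' C \<and> opp_mm S' A C = 2 \<and>
           (\<forall>C'<m*n. C' \<noteq> A \<and> C' \<noteq> C \<longrightarrow> opp_mm S' A C' = 1))"
  proof (intro allI impI)
    fix A assume A: "A < m*n" and hs: "\<not> has_spouse_m sp' A"
    obtain a x where ax: "a<m" "x<n" "A = enc n a x" using man_dec[OF A] by blast
    have hs': "\<not> has_spouse_m sp x" using hs hs_m[OF ax(1,2)] ax(3) by simp
    obtain c where c: "c<n" "c \<noteq> x" "\<not> has_spouse_m sp c" "opp_mm S x c = 2"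
      "\<forall>c'<n. c' \<noteq> x \<and> c' \<noteq> c \<longrightarrow> opp_mm S x c' = 1"
      using cmdrr_parts(7)[OF cm ax(2) hs'] by blast
    let ?C = "enc n a c"
    have "?C < m*n" using enc_less[OF ax(1) c(1)] .
    moreover have "?C \<noteq> A" using c ax by simp
    moreover have "\<not> has_spouse_m sp' ?C" using hs_m[OF ax(1) c(1)] c(3) by simp
    moreover have "opp_mm S' A ?C = 2" using mm_blk[OF ax(1,2) c(1)] c(4) ax(3) by simp
    moreover have "\<forall>C'<m*n. C' \<noteq> A \<and> C' \<noteq> ?C \<longrightarrow> opp_mm S' A C' = 1"
    proof (intro allI impI)
      fix C' assume C': "C' < m*n" "C' \<noteq> A \<and> C' \<noteq> ?C"
      obtain c' y where cy: "c'<m" "y<n" "C' = enc n c' y" using man_dec[OF C'(1)] by blast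
      show "opp_mm S' A C' = 1"
      proof (cases "c' = a")
        case True
        then have "y \<noteq> x" "y \<noteq> c" using C'(2) ax cy by auto
        then show ?thesis using mm_blk[OF ax(1,2) cy(2)] c(5) cy(2) ax cy True by simp
      next
        case False
        then show ?thesis using mm_t1[OF ax(1) cy(1) _ ax(2) cy(2)] ax cy by auto
      qed
    qed
    ultimately show "\<exists>C<m*n. C \<noteq> A \<and> \<not> has_spouse_m sp' C \<and> opp_mm S' A C = 2 \<and>
           (\<forall>C'<m*n. C' \<noteq> A \<and> C' \<noteq> C \<longrightarrow> opp_mm S' A C' = 1)" by blast
  qed
  show "\<forall>B<m*n. has_spouse_w sp' B \<longrightarrow> (\<forall>D<m*n. D \<noteq> B \<longrightarrow> opp_ww S' B D = 1)"
  proof (intro allI impI)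
    fix B D assume B: "B < m*n" and hs: "has_spouse_w sp' B" and D: "D < m*n" and ne: "D \<noteq> B"
    obtain a z where az: "a<m" "z<n" "B = enc n (sg a) z" using woman_dec[OF B] by blast
    obtain d w where dw: "d<m" "w<n" "D = enc n d w" using man_dec[OF D] by blast
    have hs': "has_spouse_w sp z" using hs hs_w[OF az(1,2)] az(3) by simp
    show "opp_ww S' B D = 1"
    proof (cases "d = sg a")
      case True
      then have "w \<noteq> z" using ne az dw by auto
      then show ?thesis using ww_blk[OF az(1,2) dw(2)] cmdrr_parts(8)[OF cm az(2) hs' dw(2)] az dw True by simp
    next
      case False
      then show ?thesis using ww_t1[OF sg_less[OF az(1)] dw(1) _ az(2) dw(2)] az dw by auto
    qed
  qed
  show "\<forall>B<m*n. \<not> has_spouse_w sp' B \<longrightarrow>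
        (\<exists>D<m*n. D \<noteq> B \<and> \<not> has_spouse_w sp' D \<and> opp_ww S' B D = 2 \<and>
           (\<forall>D'<m*n. D' \<noteq> B \<and> D' \<noteq> D \<longrightarrow> opp_ww S' B D' = 1))"
  proof (intro allI impI)
    fix B assume B: "B < m*n" and hs: "\<not> has_spouse_w sp' B"
    obtain a z where az: "a<m" "z<n" "B = enc n (sg a) z" using woman_dec[OF B] by blast
    have hs': "\<not> has_spouse_w sp z" using hs hs_w[OF az(1,2)] az(3) by simp
    obtain d where d: "d<n" "d \<noteq> z" "\<not> has_spouse_w sp d" "opp_ww S z d = 2"
      "\<forall>d'<n. d' \<noteq> z \<and> d' \<noteq> d \<longrightarrow> opp_ww S z d' = 1"
      using cmdrr_parts(9)[OF cm az(2) hs'] by blast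
    let ?D = "enc n (sg a) d"
    have "?D < m*n" using enc_less[OF sg_less[OF az(1)] d(1)] .
    moreover have "?D \<noteq> B" using d az by simp
    moreover have "\<not> has_spouse_w sp' ?D" using hs_w[OF az(1) d(1)] d(3) by simp
    moreover have "opp_ww S' B ?D = 2" using ww_blk[OF az(1,2) d(1)] d(4) az(3) by simp
    moreover have "\<forall>D'<m*n. D' \<noteq> B \<and> D' \<noteq> ?D \<longrightarrow> opp_ww S' B D' = 1"
    proof (intro allI impI)
      fix D' assume D': "D' < m*n" "D' \<noteq> B \<and> D' \<noteq> ?D"
      obtain d' w where dw: "d'<m" "w<n" "D' = enc n d' w" using man_dec[OF D'(1)] by blast
      show "opp_ww S' B D' = 1"
      proof (cases "d' = sg a")
        case True
        then have "w \<noteq> z" "w \<noteq> d" using D'(2) az dw by auto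
        then show ?thesis using ww_blk[OF az(1,2) dw(2)] d(5) dw(2) az dw True by simp
      next
        case False
        then show ?thesis using ww_t1[OF sg_less[OF az(1)] dw(1) _ az(2) dw(2)] az dw by auto
      qed
    qed
    ultimately show "\<exists>D<m*n. D \<noteq> B \<and> \<not> has_spouse_w sp' D \<and> opp_ww S' B D = 2 \<and>
           (\<forall>D'<m*n. D' \<noteq> B \<and> D' \<noteq> D \<longrightarrow> opp_ww S' B D' = 1)" by blast
  qed
qed

end

theorem theorem9:
  fixes n k m :: nat
  assumes "CMDRR_exists n k"
    and "SAMDRR_exists m"
    and "two_MOLS_exist n"
  shows "CMDRR_exists (m * n) (m * k)"
proof -
  obtain sp S where h1: "is_cmdrr n k sp S" using assms(1) unfolding CMDRR_exists_def by blast
  obtain spm Sm where h2: "is_cmdrr m m spm Sm" using assms(2) unfolding SAMDRR_exists_def CMDRR_exists_def by blast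
  obtain L1 L2 where h3: "latin_square n L1" "latin_square n L2" "orthogonal n L1 L2"
    using assms(3) unfolding two_MOLS_exist_def by blast
  interpret P: prod_setup n m k sp S spm Sm L1 L2
    using h1 h2 h3 by unfold_locales
  show ?thesis unfolding CMDRR_exists_def using P.main by blast
qed



end
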